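(* For every integer $n\geq 3$, $$\sum_{\substack{k+l+m=n\\ k,l,m\geq 1}}\frac{B_{2k}B_{2l}B_{2m}}{(2k)(2l)(2m)}=\frac{3}{2n}\sum_{\substack{k+l+m=n\\ k,l,m\geq 1}}\frac{B_{2k}B_{2l}B_{2m}}{(2k)(2l)}\binom{2n}{2k,2l,2m}+\frac3n H_{2n}\sum_{k=1}^{n-1}\binom{2n}{2k}\frac{B_{2k}B_{2n-2k}}{2k}+6H_{2n,2}\frac{B_{2n}}{2n}-\Big(n^2-\tfrac32 n+\tfrac54\Big)\frac{B_{2n-2}}{2n-2}.$$
   Context: $B_n$ denotes the Bernoulli numbers, defined by $\frac{x}{e^x-1}=\sum_{n\ge 0}B_n\frac{x^n}{n!}$. $H_i=\sum_{j=1}^i\frac1j$ is the $i$-th harmonic number, and $H_{2n,2}:=\sum_{1\le i<j\le 2n}\frac{1}{ij}$. $\binom{2n}{2k,2l,2m}=\frac{(2n)!}{(2k)!(2l)!(2m)!}$ is the multinomial coefficient. *)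

theory Defs
  imports "HOL-Analysis.Harmonic_Numbers" "HOL-Computational_Algebra.Formal_Power_Series"
begin

definition bernoulli :: "nat \<Rightarrow> real" where
  "bernoulli n = fact n * fps_nth (fps_X / (fps_exp 1 - 1)) n"

definition harm2 :: "nat \<Rightarrow> real" where
  "harm2 N = (\<Sum>(i,j)\<in>{(i,j). 1 \<le> i \<and> i < j \<and> j \<le> N}. 1 / (real i * real j))"

definition comp3 :: "nat \<Rightarrow> (nat \<times> nat \<times> nat) set" where
  "comp3 n = {(k,l,m). k \<ge> 1 \<and> l \<ge> 1 \<and> m \<ge> 1 \<and> k + l + m = n}"

definition multinom3 :: "nat \<Rightarrow> nat \<Rightarrow> nat \<Rightarrow> nat \<Rightarrow> real" where
  "multinom3 N a b c = fact N / (fact a * fact b * fact c)"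

end

theory Submission
  imports Defs "HOL-Computational_Algebra.Polynomial"
begin
unbundle no vec_syntax
notation fps_nth (infixl \<open>$\<close> 75)

definition bfps :: "real fps" where "bfps = fps_X / (fps_exp 1 - 1)"

lemma bfps_nth: "bfps $ n = bernoulli n / fact n"
  by (simp add: bfps_def bernoulli_def)

lemma expm1_ne: "(fps_exp (1::real) - 1) \<noteq> 0"
proof
  assume "fps_exp (1::real) - 1 = 0"
  hence "(fps_exp (1::real) - 1) $ 1 = 0" by simp
  thus False by simp
qed

lemma subdeg_expm1: "subdegree (fps_exp (1::real) - 1) = 1"
  by (rule subdegreeI) auto

lemma bfps_mult: "bfps * (fps_exp 1 - 1) = fps_X"
proof -
  have "(fps_exp (1::real) - 1) dvd fps_X"
  proof -
    have "subdegree (fps_X::real fps) = 1" by simp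
    thus ?thesis using fps_dvd_iff[OF expm1_ne, of fps_X] subdeg_expm1 by simp
  qed
  thus ?thesis unfolding bfps_def by simp
qed

lemma bern0: "bernoulli 0 = 1"
proof -
  have "(bfps * (fps_exp 1 - 1)) $ 1 = 1" by (simp add: bfps_mult)
  thus ?thesis by (simp add: fps_mult_nth bfps_nth)
qed

lemma bern1: "bernoulli 1 = -1/2"
proof -
  have "(bfps * (fps_exp 1 - 1)) $ 2 = 0" by (simp add: bfps_mult)
  hence "bfps $ 0 * (1/2) + bfps $ 1 = 0"
    by (simp add: fps_mult_nth numeral_2_eq_2 atLeast0_atMost_Suc)
  thus ?thesis by (simp add: bfps_nth bern0)
qed

definition alt :: "real fps \<Rightarrow> real fps" where
  "alt f = Abs_fps (\<lambda>n. (-1)^n * f $ n)"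

lemma alt_nth: "alt f $ n = (-1)^n * f $ n" by (simp add: alt_def)

lemma alt_mult: "alt (f * g) = alt f * alt g"
proof (rule fps_ext)
  fix n
  have "alt (f * g) $ n = (\<Sum>i=0..n. ((-1)^i * f$i) * ((-1)^(n-i) * g$(n-i)))"
    by (auto simp: alt_nth fps_mult_nth sum_distrib_left power_add[symmetric] intro!: sum.cong)
  thus "alt (f * g) $ n = (alt f * alt g) $ n" by (simp add: fps_mult_nth alt_nth)
qed

lemma alt_diff: "alt (f - g) = alt f - alt g"
  by (rule fps_ext) (simp add: alt_nth algebra_simps)

lemma alt_X: "alt fps_X = - fps_X"
  by (rule fps_ext) (simp add: alt_nth fps_X_def)

lemma alt_one: "alt 1 = 1"
  by (rule fps_ext) (simp add: alt_nth)

lemma alt_exp: "alt (fps_exp 1) = fps_exp (-1)"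
  by (rule fps_ext) (simp add: alt_nth power_minus')

lemma alt_bfps: "alt bfps = fps_X + bfps"
proof -
  let ?E = "fps_exp (1::real)" and ?F = "fps_exp (-1::real)"
  have EF: "?F * ?E = 1" using fps_exp_add_mult[of "-1::real" 1] by simp
  have "alt bfps * (?F - 1) = - fps_X"
    using arg_cong[OF bfps_mult, of alt] by (simp add: alt_mult alt_diff alt_X alt_one alt_exp)
  hence h: "alt bfps * ?F - alt bfps = - fps_X" by (simp add: algebra_simps)
  have "alt bfps * ?F * ?E - alt bfps * ?E = - fps_X * ?E" using h by (metis left_diff_distrib)
  hence "alt bfps - alt bfps * ?E = - fps_X * ?E" by (simp add: mult.assoc EF)
  hence "alt bfps * (?E - 1) = fps_X * ?E" by (simp add: algebra_simps)
  also have "\<dots> = (fps_X + bfps) * (?E - 1)"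
  proof -
    have "bfps * ?E = bfps + fps_X" using bfps_mult by (simp add: algebra_simps)
    thus ?thesis by (simp add: algebra_simps)
  qed
  finally have "(alt bfps - (fps_X + bfps)) * (?E - 1) = 0" by (simp add: algebra_simps)
  thus ?thesis using expm1_ne by simp
qed

lemma bern_odd: assumes "odd n" "n \<ge> 3" shows "bernoulli n = 0"
proof -
  have "alt bfps $ n = (fps_X + bfps) $ n" by (simp add: alt_bfps)
  hence "- bfps $ n = bfps $ n" using assms by (simp add: alt_nth fps_X_def)
  thus ?thesis by (simp add: bfps_nth)
qed

definition bp :: "nat \<Rightarrow> real \<Rightarrow> real" where
  "bp n y = (\<Sum>k\<le>n. real (n choose k) * bernoulli k * y^(n-k))"

lemma bp_fps: "(bfps * fps_exp y) $ n = bp n y / fact n"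
proof -
  have "(bfps * fps_exp y) $ n = (\<Sum>k=0..n. bernoulli k / fact k * (y^(n-k) / fact (n-k)))"
    by (simp add: fps_mult_nth bfps_nth)
  also have "\<dots> = (\<Sum>k\<le>n. real (n choose k) * bernoulli k * y^(n-k)) / fact n"
    unfolding sum_divide_distrib atMost_atLeast0
  proof (rule sum.cong)
    fix k assume "k \<in> {0..n}"
    hence k: "k \<le> n" by simp
    have "real (n choose k) = fact n / (fact k * fact (n-k))" using binomial_fact[OF k] by simp
    thus "bernoulli k / fact k * (y^(n-k) / fact (n-k)) = real (n choose k) * bernoulli k * y^(n-k) / fact n"
      by simp
  qed simp
  finally show ?thesis by (simp add: bp_def)
qed

lemma bp_diff: assumes "n \<ge> 1" shows "bp n (y+1) - bp n y = real n * y^(n-1)"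
proof -
  have "bfps * fps_exp (y+1) - bfps * fps_exp y = bfps * (fps_exp 1 - 1) * fps_exp y"
    by (simp add: fps_exp_add_mult algebra_simps)
  also have "\<dots> = fps_X * fps_exp y" by (simp add: bfps_mult)
  finally have "(bfps * fps_exp (y+1) - bfps * fps_exp y) $ n = (fps_X * fps_exp y) $ n" by simp
  hence "bp n (y+1) / fact n - bp n y / fact n = y^(n-1) / fact (n-1)"
    using assms by (simp add: bp_fps)
  moreover have "(fact n::real) = real n * fact (n-1)" using assms
    by (simp add: fact_reduce)
  ultimately have "(fact (n-1)::real) * (bp n (y+1) - bp n y) = fact (n-1) * (real n * y^(n-1))"
    using assms by (simp add: field_simps)
  thus ?thesis by simp
qed

definition lam :: "nat \<Rightarrow> real poly" where
  "lam N = (if N = 0 then 0 else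
     (\<Sum>k\<le>N. monom (- (real (Suc N choose k) * bernoulli k * (-1)^(Suc N - k)) / (real N * real (Suc N))) (Suc N - k)))"

lemma poly_lam: assumes "N \<ge> 1"
  shows "poly (lam N) y = - (bp (Suc N) (-y) - bernoulli (Suc N)) / (real N * real (Suc N))"
proof -
  have "poly (lam N) y = (\<Sum>k\<le>N. poly (monom (- (real (Suc N choose k) * bernoulli k * (-1)^(Suc N - k)) / (real N * real (Suc N))) (Suc N - k)) y)"
    using assms by (simp add: lam_def poly_sum)
  also have "\<dots> = (\<Sum>k\<le>N. - (real (Suc N choose k) * bernoulli k * (-y)^(Suc N - k)) / (real N * real (Suc N)))"
    by (intro sum.cong refl) (simp add: poly_monom power_minus')
  also have "\<dots> = - (\<Sum>k\<le>N. real (Suc N choose k) * bernoulli k * (-y)^(Suc N - k)) / (real N * real (Suc N))"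
    by (simp add: sum_divide_distrib sum_negf)
  also have "(\<Sum>k\<le>N. real (Suc N choose k) * bernoulli k * (-y)^(Suc N - k)) = bp (Suc N) (-y) - bernoulli (Suc N)"
    by (simp add: bp_def)
  finally show ?thesis .
qed

lemma lam_diff: assumes "N \<ge> 1"
  shows "poly (lam N) (y+1) - poly (lam N) y = (-(y+1))^N / real N"
proof -
  have d: "bp (Suc N) ((-y-1)+1) - bp (Suc N) (-y-1) = real (Suc N) * (-y-1)^N"
    using bp_diff[of "Suc N" "-y-1"] by simp
  have e1: "poly (lam N) (y+1) = - (bp (Suc N) (-y-1) - bernoulli (Suc N)) / (real N * real (Suc N))"
    using poly_lam[OF assms, of "y+1"] by simp
  have e2: "poly (lam N) y = - (bp (Suc N) (-y) - bernoulli (Suc N)) / (real N * real (Suc N))"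
    using poly_lam[OF assms, of "y"] by simp
  have "poly (lam N) (y+1) - poly (lam N) y = (bp (Suc N) (-y) - bp (Suc N) (-y-1)) / (real N * real (Suc N))"
    unfolding e1 e2 by (simp add: diff_divide_distrib[symmetric])
  also have "\<dots> = real (Suc N) * (-y-1)^N / (real N * real (Suc N))" using d by simp
  also have "\<dots> = (-(y+1))^N / real N" by (simp del: of_nat_Suc)
  finally show ?thesis .
qed

lemma coeff_lam: assumes "N \<ge> 1" "j \<ge> 1" "j \<le> Suc N"
  shows "coeff (lam N) j = - (real (Suc N choose (Suc N - j)) * bernoulli (Suc N - j) * (-1)^j) / (real N * real (Suc N))"
proof -
  define c where "c k = - (real (Suc N choose k) * bernoulli k * (-1)^(Suc N - k)) / (real N * real (Suc N))" for k
  have l: "lam N = (\<Sum>k\<le>N. monom (c k) (Suc N - k))"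
    using assms by (simp add: lam_def c_def)
  have "coeff (lam N) j = (\<Sum>k\<le>N. coeff (monom (c k) (Suc N - k)) j)"
    unfolding l by (rule coeff_sum)
  also have "\<dots> = (\<Sum>k\<le>N. if k = Suc N - j then c k else 0)"
  proof (rule sum.cong[OF refl])
    fix k assume "k \<in> {..N}"
    hence "(Suc N - k = j) = (k = Suc N - j)" using assms by auto
    thus "coeff (monom (c k) (Suc N - k)) j = (if k = Suc N - j then c k else 0)"
      by (simp only: coeff_monom)
  qed
  also have "\<dots> = c (Suc N - j)"
    using assms by (subst sum.delta) auto
  also have "Suc N - (Suc N - j) = j" using assms by simp
  hence "c (Suc N - j) = - (real (Suc N choose (Suc N - j)) * bernoulli (Suc N - j) * (-1)^j) / (real N * real (Suc N))"
    unfolding c_def by simp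
  finally show ?thesis .
qed

lemma coeff_lam0: "coeff (lam N) 0 = 0"
  by (simp add: lam_def coeff_sum coeff_monom)

lemma poly_lam0: "poly (lam N) 0 = 0"
  by (simp add: poly_0_coeff_0 coeff_lam0)

lemma coeff_lam1: assumes "N \<ge> 1" shows "coeff (lam N) 1 = bernoulli N / real N"
proof -
  have "coeff (lam N) 1 = real (Suc N) * bernoulli N / (real N * real (Suc N))"
    using coeff_lam[of N 1] assms by simp
  also have "\<dots> = bernoulli N / real N" by (simp del: of_nat_Suc)
  finally show ?thesis .
qed

lemma coeff_lam2: assumes "N \<ge> 1" shows "coeff (lam N) 2 = - bernoulli (N - 1) / 2"
proof -
  obtain M where M: "N = Suc M" using assms by (cases N) auto
  have h: "real (Suc (Suc M) choose M) * (2 * fact M) = real (Suc (Suc M)) * real (Suc M) * fact M"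
    using binomial_fact[of M "Suc (Suc M)", where 'a=real] by (simp add: field_simps)
  hence "(real (Suc (Suc M) choose M) * 2 - real (Suc (Suc M)) * real (Suc M)) * fact M = 0"
    by (simp add: algebra_simps)
  hence b: "real (Suc (Suc M) choose M) = real (Suc (Suc M)) * real (Suc M) / 2" by simp
  have e: "Suc N - 2 = M" using M by simp
  have "coeff (lam N) 2 = - (real (Suc N choose M) * bernoulli M) / (real N * real (Suc N))"
    using coeff_lam[of N 2] assms M unfolding e by simp
  also have "\<dots> = - (real (Suc (Suc M)) * real (Suc M) / 2 * bernoulli M) / (real (Suc M) * real (Suc (Suc M)))"
    unfolding M b by simp
  also have "\<dots> = - bernoulli M / 2" by (simp del: of_nat_Suc)
  finally show ?thesis using M by simp
qed

lemma coeff_lam3: assumes "N \<ge> 2" shows "coeff (lam N) 3 = real (N - 1) * bernoulli (N - 2) / 6"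
proof -
  obtain M where M: "N = Suc (Suc M)" using assms by (cases N; cases "N - 1") auto
  have h: "real (Suc (Suc (Suc M)) choose M) * (6 * fact M) = real (Suc (Suc (Suc M))) * real (Suc (Suc M)) * real (Suc M) * fact M"
    using binomial_fact[of M "Suc (Suc (Suc M))", where 'a=real] by (simp add: field_simps fact_numeral)
  hence "(real (Suc (Suc (Suc M)) choose M) * 6 - real (Suc (Suc (Suc M))) * real (Suc (Suc M)) * real (Suc M)) * fact M = 0"
    by (simp add: algebra_simps)
  hence b: "real (Suc (Suc (Suc M)) choose M) = real (Suc (Suc (Suc M))) * real (Suc (Suc M)) * real (Suc M) / 6" by simp
  have e: "Suc N - 3 = M" using M by simp
  have "coeff (lam N) 3 = (real (Suc N choose M) * bernoulli M) / (real N * real (Suc N))"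
    using coeff_lam[of N 3] assms M unfolding e by simp
  also have "\<dots> = (real (Suc (Suc (Suc M))) * real (Suc (Suc M)) * real (Suc M) / 6 * bernoulli M) / (real (Suc (Suc M)) * real (Suc (Suc (Suc M))))"
    unfolding M b by simp
  also have "\<dots> = real (Suc M) * bernoulli M / 6" by (simp del: of_nat_Suc)
  finally show ?thesis using M by simp
qed

definition Lam :: "real poly fps" where "Lam = Abs_fps lam"
definition ev :: "real \<Rightarrow> real poly fps \<Rightarrow> real fps" where "ev y F = Abs_fps (\<lambda>n. poly (F $ n) y)"

lemma ev_nth: "ev y F $ n = poly (F $ n) y" by (simp add: ev_def)

lemma ev_mult: "ev y (F * G) = ev y F * ev y G"
  by (rule fps_ext) (simp add: ev_def fps_mult_nth poly_sum)

lemma ev_one: "ev y 1 = 1"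
  by (rule fps_ext) (simp add: ev_def)

lemma ev_power: "ev y (F^k) = (ev y F)^k"
  by (induct k) (simp_all add: ev_one ev_mult)

definition sl :: "nat \<Rightarrow> real poly fps \<Rightarrow> real fps" where "sl j F = Abs_fps (\<lambda>n. coeff (F $ n) j)"

lemma sl_nth: "sl j F $ n = coeff (F $ n) j" by (simp add: sl_def)

lemma sl_mult: "sl n (F * G) = (\<Sum>i\<le>n. sl i F * sl (n - i) G)"
proof (rule fps_ext)
  fix N
  have "sl n (F*G) $ N = (\<Sum>a=0..N. \<Sum>i\<le>n. coeff (F$a) i * coeff (G$(N-a)) (n-i))"
    by (simp add: sl_def fps_mult_nth coeff_sum coeff_mult)
  also have "\<dots> = (\<Sum>i\<le>n. \<Sum>a=0..N. coeff (F$a) i * coeff (G$(N-a)) (n-i))" by (rule sum.swap)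
  also have "\<dots> = (\<Sum>i\<le>n. sl i F * sl (n-i) G) $ N" by (simp add: sl_def fps_mult_nth fps_sum_nth)
  finally show "sl n (F * G) $ N = (\<Sum>i\<le>n. sl i F * sl (n - i) G) $ N" .
qed

lemma sl_low: assumes "sl 0 F = 0" shows "j < k \<Longrightarrow> sl j (F^k) = 0"
proof (induct k arbitrary: j)
  case 0 thus ?case by simp
next
  case (Suc k)
  have "sl j (F^Suc k) = (\<Sum>i\<le>j. sl i F * sl (j - i) (F^k))" by (simp add: sl_mult)
  also have "\<dots> = 0"
  proof (rule sum.neutral, rule ballI)
    fix i assume "i \<in> {..j}"
    show "sl i F * sl (j - i) (F^k) = 0"
    proof (cases "i = 0")
      case True thus ?thesis using assms by simp
    next
      case False moreover have "i \<le> j" using \<open>i \<in> {..j}\<close> by simp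
      ultimately have "j - i < k" using Suc.prems by arith
      thus ?thesis using Suc.hyps by simp
    qed
  qed
  finally show ?case .
qed

lemma sum_le3: "(\<Sum>i\<le>(3::nat). f i) = f 0 + f 1 + f 2 + (f 3 :: 'a::comm_monoid_add)"
  by (simp add: numeral_3_eq_3 numeral_2_eq_2 add.assoc)

lemma sl_sq2: assumes "sl 0 F = 0" shows "sl 2 (F^2) = sl 1 F ^ 2"
  using assms by (simp add: power2_eq_square sl_mult numeral_2_eq_2)

lemma sl_sq1: assumes "sl 0 F = 0" shows "sl 1 (F^2) = 0"
  using sl_low[OF assms, of 1 2] by simp

lemma sl_sq3: assumes "sl 0 F = 0" shows "sl 3 (F^2) = sl 1 F * sl 2 F + sl 1 F * sl 2 F"
proof -
  have "sl 3 (F^2) = (\<Sum>i\<le>3. sl i F * sl (3 - i) F)" by (simp add: power2_eq_square sl_mult)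
  also have "\<dots> = sl 1 F * sl 2 F + sl 2 F * sl 1 F" using assms by (simp add: sum_le3)
  finally show ?thesis by (simp add: algebra_simps)
qed

lemma sl_cube3: assumes "sl 0 F = 0" shows "sl 3 (F^3) = sl 1 F ^ 3"
proof -
  have "F^3 = F * F^2" by (simp add: power3_eq_cube power2_eq_square)
  hence "sl 3 (F^3) = (\<Sum>i\<le>3. sl i F * sl (3 - i) (F^2))" by (simp add: sl_mult)
  also have "\<dots> = sl 1 F * sl 2 (F^2)"
    using assms sl_sq1[OF assms] sl_low[OF assms, of 0 2] by (simp add: sum_le3)
  finally show ?thesis using sl_sq2[OF assms] by (simp add: power3_eq_cube power2_eq_square)
qed

lemma sl0_Lam: "sl 0 Lam = 0" by (rule fps_ext) (simp add: sl_def Lam_def coeff_lam0)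

definition P :: "real poly fps" where
  "P = Abs_fps (\<lambda>N. \<Sum>k=0..N. smult (1 / fact k) ((Lam^k) $ N))"

lemma sl3_P: assumes "N \<ge> 3"
  shows "sl 3 P $ N = sl 3 Lam $ N + (sl 1 Lam * sl 2 Lam) $ N + (sl 1 Lam ^ 3) $ N / 6"
proof -
  have "sl 3 P $ N = (\<Sum>k=0..N. sl 3 (Lam^k) $ N / fact k)"
    by (simp add: sl_def P_def coeff_sum)
  also have "\<dots> = (\<Sum>k=0..3. sl 3 (Lam^k) $ N / fact k)"
  proof (rule sum.mono_neutral_right)
    show "\<forall>i\<in>{0..N} - {0..3}. sl 3 (Lam ^ i) $ N / fact i = 0"
      using sl_low[OF sl0_Lam] by auto
  qed (use assms in auto)
  also have "\<dots> = sl 3 (Lam^0) $ N + sl 3 (Lam^1) $ N + sl 3 (Lam^2) $ N / 2 + sl 3 (Lam^3) $ N / 6"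
    by (simp add: numeral_3_eq_3 numeral_2_eq_2 fact_numeral)
  also have "sl 3 (Lam^0) $ N = 0" using assms by (simp add: sl_def)
  finally show ?thesis
    by (simp add: sl_sq3[OF sl0_Lam] sl_cube3[OF sl0_Lam] numeral_fps_const)
qed

lemma ev_P: "poly (P $ N) y = (fps_exp 1 oo ev y Lam) $ N"
  by (simp add: P_def fps_compose_nth poly_sum ev_power[symmetric] ev_nth)

definition gm :: "real fps" where
  "gm = Abs_fps (\<lambda>N. if N = 0 then 0 else bernoulli N / (real N * fact N))"
definition pp :: "nat \<Rightarrow> real poly" where "pp N = pochhammer [:1,1:] N"
definition RR :: "nat \<Rightarrow> real poly" where "RR N = (\<Sum>k=0..N. monom ((gm^k) $ N / fact k) k)"
definition Q :: "real poly fps" where "Q = Abs_fps (\<lambda>N. pp N * RR N)"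

lemma poly_pp: "poly (pp N) y = pochhammer (y+1) N"
  by (induct N) (simp_all add: pp_def pochhammer_Suc algebra_simps)

lemma poly_RR: "poly (RR N) y = (fps_exp 1 oo (fps_const y * gm)) $ N"
  by (simp add: RR_def fps_compose_nth poly_sum poly_monom power_mult_distrib algebra_simps)

lemma coeff_RR: assumes "j \<le> N" shows "coeff (RR N) j = (gm^j) $ N / fact j"
proof -
  have "coeff (RR N) j = (\<Sum>k=0..N. if k = j then (gm^k) $ N / fact k else 0)"
    unfolding RR_def coeff_sum by (intro sum.cong refl) (auto simp: coeff_monom)
  also have "\<dots> = (gm^j) $ N / fact j" using assms by (simp add: sum.delta)
  finally show ?thesis .
qed

lemma poly_Q: "poly (Q $ N) y = pochhammer (y+1) N * (fps_exp 1 oo (fps_const y * gm)) $ N"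
  by (simp add: Q_def poly_pp poly_RR)

lemma pp_Suc: "pp (Suc N) = smult (real N + 1) (pp N) + pCons 0 (pp N)"
proof -
  have "poly (pp (Suc N)) = poly (smult (real N + 1) (pp N) + pCons 0 (pp N))"
    by (rule ext) (simp add: poly_pp pochhammer_Suc algebra_simps)
  thus ?thesis by (simp add: poly_eq_poly_eq_iff)
qed

lemma harm2_Suc: "harm2 (Suc N) = harm2 N + harm N / real (Suc N)"
proof -
  let ?S = "\<lambda>N::nat. {(i,j). 1 \<le> i \<and> i < j \<and> j \<le> N}"
  have fin: "finite (?S N)" for N :: nat
  proof -
    have "?S N \<subseteq> {1..N} \<times> {1..N}" by auto
    thus ?thesis by (rule finite_subset) simp
  qed
  have eq: "?S (Suc N) = ?S N \<union> (\<lambda>i. (i, Suc N)) ` {1..N}" by auto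
  have "harm2 (Suc N) = (\<Sum>(i,j)\<in>?S N \<union> (\<lambda>i. (i, Suc N)) ` {1..N}. 1 / (real i * real j))"
    unfolding harm2_def eq ..
  also have "\<dots> = harm2 N + (\<Sum>(i,j)\<in>(\<lambda>i. (i, Suc N)) ` {1..N}. 1 / (real i * real j))"
    unfolding harm2_def by (rule sum.union_disjoint) (use fin[of N] in auto)
  also have "(\<Sum>(i,j)\<in>(\<lambda>i. (i, Suc N)) ` {1..N}. 1 / (real i * real j)) = (\<Sum>i=1..N. 1 / (real i * real (Suc N)))"
    by (subst sum.reindex) (auto simp: inj_on_def)
  also have "\<dots> = harm N / real (Suc N)"
    by (simp add: harm_def sum_divide_distrib field_simps del: of_nat_Suc)
  finally show ?thesis .
qed

lemma coeff_pp0: "coeff (pp N) 0 = fact N"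
proof (induct N)
  case 0 thus ?case by (simp add: pp_def)
next
  case (Suc N) thus ?case by (simp add: pp_Suc algebra_simps)
qed

lemma coeff_pp1: "coeff (pp N) 1 = fact N * harm N"
proof (induct N)
  case 0 thus ?case by (simp add: pp_def harm_def)
next
  case (Suc N)
  have "coeff (pp (Suc N)) 1 = (real N + 1) * (fact N * harm N) + fact N"
    using Suc by (simp add: pp_Suc coeff_pp0)
  also have "\<dots> = fact (Suc N) * harm (Suc N)"
    by (simp add: harm_Suc field_simps)
  finally show ?case .
qed

lemma coeff_pp2: "coeff (pp N) 2 = fact N * harm2 N"
proof (induct N)
  case 0
  have e: "{(i,j). 1 \<le> i \<and> i < j \<and> j \<le> (0::nat)} = {}" by auto
  show ?case unfolding harm2_def e by (simp add: pp_def)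
next
  case (Suc N)
  have "coeff (pp (Suc N)) 2 = (real N + 1) * (fact N * harm2 N) + fact N * harm N"
    using Suc coeff_pp1[of N] by (simp add: pp_Suc numeral_2_eq_2)
  also have "\<dots> = fact (Suc N) * harm2 (Suc N)"
    by (simp add: harm2_Suc field_simps)
  finally show ?case .
qed

lemma sl3_Q: assumes "N \<ge> 3"
  shows "sl 3 Q $ N = fact N * (gm^3) $ N / 6 + fact N * harm N * (gm^2) $ N / 2 + fact N * harm2 N * gm $ N"
proof -
  have "sl 3 Q $ N = (\<Sum>i\<le>3. coeff (pp N) i * coeff (RR N) (3 - i))"
    by (simp add: sl_def Q_def coeff_mult)
  also have "\<dots> = coeff (pp N) 0 * coeff (RR N) 3 + coeff (pp N) 1 * coeff (RR N) 2
      + coeff (pp N) 2 * coeff (RR N) 1 + coeff (pp N) 3 * coeff (RR N) 0"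
    by (simp add: sum_le3)
  also have "coeff (RR N) 0 = 0" using assms by (simp add: coeff_RR)
  finally show ?thesis using assms
    by (simp add: coeff_RR coeff_pp0 coeff_pp1[simplified] coeff_pp2 fact_numeral)
qed

lemma ode_unique:
  fixes F H A :: "real fps"
  assumes "fps_deriv F = A * F" "fps_deriv H = A * H" "F $ 0 = H $ 0"
  shows "F = H"
proof -
  define D where "D = F - H"
  have dD: "fps_deriv D = A * D" using assms by (simp add: D_def algebra_simps)
  have "D $ n = 0" for n
  proof (induct n rule: less_induct)
    case (less n)
    show ?case
    proof (cases n)
      case 0 thus ?thesis using assms by (simp add: D_def)
    next
      case (Suc k)
      have "(fps_deriv D) $ k = (A * D) $ k" using dD by simp
      also have "\<dots> = (\<Sum>i=0..k. A$i * D$(k-i))" by (simp add: fps_mult_nth)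
      also have "\<dots> = 0" using less Suc by (intro sum.neutral) auto
      finally have "real (Suc k) * D $ Suc k = 0" by simp
      thus ?thesis using Suc by simp
    qed
  qed
  hence "D = 0" by (simp add: fps_eq_iff)
  thus ?thesis by (simp add: D_def)
qed

definition u :: "real fps" where "u = Abs_fps (\<lambda>N. (-1)^N / fact (Suc N))"

lemma u0: "u $ 0 = 1" by (simp add: u_def)

lemma Xu: "fps_X * u = 1 - fps_exp (-1)"
proof (rule fps_ext)
  fix N show "(fps_X * u) $ N = (1 - fps_exp (-1)) $ N"
  proof (cases N)
    case (Suc k) thus ?thesis by (simp add: u_def power_minus' ring_distribs)
  qed simp
qed

lemma u_deriv: "fps_X * fps_deriv u = 1 - fps_X * u - u"
proof -
  have "fps_deriv (fps_X * u) = fps_X * fps_deriv u + u" by (simp add: algebra_simps)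
  also have "fps_deriv (fps_X * u) = fps_exp (-1)"
  proof -
    have "fps_deriv (fps_exp (-1::real)) = fps_const (-1) * fps_exp (-1)" by (rule fps_exp_deriv)
    moreover have "fps_const (-1::real) = -1" by (metis fps_const_neg fps_const_1_eq_1)
    ultimately show ?thesis unfolding Xu by simp
  qed
  also have "fps_exp (-1) = 1 - fps_X * u" by (simp add: Xu)
  finally show ?thesis by (simp add: algebra_simps)
qed

lemma gm_deriv: "fps_X * fps_deriv gm = bfps - 1"
proof (rule fps_ext)
  fix N show "(fps_X * fps_deriv gm) $ N = (bfps - 1) $ N"
  proof (cases N)
    case 0 thus ?thesis by (simp add: bfps_nth bern0)
  next
    case (Suc k) thus ?thesis by (simp add: gm_def bfps_nth del: of_nat_Suc)
  qed
qed

lemma u_gm: "fps_deriv u = fps_deriv gm * u"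
proof -
  let ?E = "fps_exp (1::real)" and ?F = "fps_exp (-1::real)"
  have EF: "?E * ?F = 1" using fps_exp_add_mult[of "1::real" "-1"] by simp
  have k1: "bfps * (1 - ?F) = fps_X * ?F"
  proof -
    have "bfps * (?E - 1) * ?F = fps_X * ?F" by (simp add: bfps_mult)
    moreover have "bfps * (?E - 1) * ?F = bfps * (?E * ?F) - bfps * ?F" by (simp add: algebra_simps)
    ultimately show ?thesis unfolding EF by (simp add: algebra_simps)
  qed
  have "fps_X * (1 - fps_X * u - bfps * u) = fps_X - fps_X * (fps_X * u) - bfps * (fps_X * u)"
    by (simp add: algebra_simps)
  also have "\<dots> = 0" unfolding Xu k1 by (simp add: algebra_simps)
  finally have "1 - fps_X * u - bfps * u = 0" by simp
  hence "fps_X * fps_deriv u = fps_X * (fps_deriv gm * u)"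
    unfolding u_deriv mult.assoc[symmetric] gm_deriv by (simp add: algebra_simps)
  thus ?thesis by simp
qed

lemma exp_gm: "fps_exp 1 oo (fps_const (real m) * gm) = u ^ m"
proof -
  define g where "g = fps_const (real m) * gm"
  have g0: "g $ 0 = 0" by (simp add: gm_def g_def)
  have dg: "fps_deriv g = fps_const (real m) * fps_deriv gm" by (simp add: g_def)
  have "fps_exp 1 oo g = u ^ m"
  proof (rule ode_unique)
  show "fps_deriv (fps_exp 1 oo g) = (fps_const (real m) * fps_deriv gm) * (fps_exp 1 oo g)"
    using fps_compose_deriv[OF g0, of "fps_exp 1"] by (simp add: dg mult.commute)
  show "fps_deriv (u ^ m) = (fps_const (real m) * fps_deriv gm) * u ^ m"
  proof (cases m)
    case 0 thus ?thesis by simp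
  next
    case (Suc k)
    have "fps_deriv (u ^ m) = fps_const (real m) * fps_deriv u * u ^ k"
      unfolding fps_deriv_power using Suc by simp
    also have "\<dots> = (fps_const (real m) * fps_deriv gm) * u ^ m"
      using Suc by (simp add: u_gm algebra_simps)
    finally show ?thesis .
  qed
  show "(fps_exp 1 oo g) $ 0 = (u ^ m) $ 0"
    by (simp add: fps_power_zeroth u0)
  qed
  thus ?thesis by (simp add: g_def)
qed

definition W :: "nat \<Rightarrow> real fps" where
  "W m = Abs_fps (\<lambda>N. pochhammer (real m + 1) N * (u^m) $ N)"

lemma poly_Q_nat: "poly (Q $ N) (real m) = W m $ N"
  by (simp add: poly_Q exp_gm W_def)

lemma um_rec:
  "(real (Suc m) + real N) * (u^Suc m) $ N = real (Suc m) * ((u^m) $ N - (if N = 0 then 0 else (u^Suc m) $ (N-1)))"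
proof -
  define a where "a = u ^ Suc m"
  define c where "c = u ^ m"
  define s where "s = real (Suc m)"
  have da: "fps_deriv a = fps_const s * fps_deriv u * c"
    unfolding a_def c_def s_def by (simp only: fps_deriv_power diff_Suc_1)
  have ua: "u * c = a" by (simp add: a_def c_def)
  have "fps_X * fps_deriv a = fps_const s * c * (fps_X * fps_deriv u)" by (simp add: da ac_simps)
  also have "\<dots> = fps_const s * c * (1 - fps_X * u - u)" by (simp only: u_deriv)
  also have "\<dots> = fps_const s * (c - fps_X * (u * c) - u * c)" by (simp add: algebra_simps)
  also have "\<dots> = fps_const s * (c - fps_X * a - a)" by (simp only: ua)
  finally have e: "(fps_X * fps_deriv a) $ N = (fps_const s * (c - fps_X * a - a)) $ N" by simp
  have "(s + real N) * a $ N = s * (c $ N - (if N = 0 then 0 else a $ (N-1)))"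
  proof (cases N)
    case 0 thus ?thesis using e by simp (metis)
  next
    case (Suc k)
    thus ?thesis using e by (simp add: algebra_simps del: of_nat_Suc)
  qed
  thus ?thesis unfolding a_def c_def s_def .
qed

lemma W_rec: "W (Suc m) * (1 + fps_const (real (Suc m)) * fps_X) = W m"
proof (rule fps_ext)
  fix N
  define s where "s = real (Suc m)"
  have s0: "s > 0" by (simp add: s_def)
  have lhs: "(W (Suc m) * (1 + fps_const s * fps_X)) $ N = W (Suc m) $ N + s * (if N = 0 then 0 else W (Suc m) $ (N-1))"
    by (simp add: algebra_simps)
  have rec: "(s + real N) * (u^Suc m) $ N = s * ((u^m) $ N - (if N = 0 then 0 else (u^Suc m) $ (N-1)))"
    using um_rec[of m N] by (simp add: s_def)
  have Wm: "W m $ N = pochhammer s N * (u^m) $ N" by (simp add: W_def s_def add.commute)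
  have W1: "W (Suc m) $ k = pochhammer (s+1) k * (u^Suc m) $ k" for k by (simp add: W_def s_def)
  have p1: "s * pochhammer (s+1) N = pochhammer s N * (s + real N)"
    using pochhammer_rec[of s N] pochhammer_Suc[of s N] by simp
  have "(s + real N) * ((W (Suc m) * (1 + fps_const s * fps_X)) $ N) = (s + real N) * W m $ N"
  proof (cases N)
    case 0 thus ?thesis using rec unfolding lhs Wm W1 by (simp add: algebra_simps)
  next
    case (Suc k)
    have p2: "pochhammer (s+1) N = pochhammer (s+1) k * (s + real N)"
      using Suc pochhammer_Suc[of "s+1" k] by (simp add: algebra_simps)
    have "(s + real N) * ((W (Suc m) * (1 + fps_const s * fps_X)) $ N)
        = pochhammer (s+1) N * ((s + real N) * (u^Suc m) $ N) + s * (pochhammer (s+1) k * (s + real N)) * (u^Suc m) $ k"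
      unfolding lhs W1 using Suc by (simp add: algebra_simps)
    also have "\<dots> = pochhammer (s+1) N * (s * ((u^m) $ N - (u^Suc m) $ k)) + s * pochhammer (s+1) N * (u^Suc m) $ k"
      unfolding rec p2[symmetric] using Suc by simp
    also have "\<dots> = (s * pochhammer (s+1) N) * (u^m) $ N" by (simp add: algebra_simps)
    also have "\<dots> = (s + real N) * W m $ N" unfolding p1 Wm by (simp add: algebra_simps)
    finally show ?thesis .
  qed
  moreover have "s + real N > 0" using s0 by simp
  ultimately show "(W (Suc m) * (1 + fps_const (real (Suc m)) * fps_X)) $ N = W m $ N"
    by (simp add: s_def)
qed

definition L :: "nat \<Rightarrow> real fps" where "L m = ev (real m) Lam"

lemma L_nth: "L m $ N = poly (lam N) (real m)" by (simp add: L_def ev_nth Lam_def)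

lemma L_diff:
  "(fps_deriv (L (Suc m)) - fps_deriv (L m)) * (1 + fps_const (real (Suc m)) * fps_X) = - fps_const (real (Suc m))"
proof (rule fps_ext)
  fix N
  define s where "s = real (Suc m)"
  define d where "d = fps_deriv (L (Suc m)) - fps_deriv (L m)"
  have dn: "d $ k = (-s)^(Suc k)" for k
  proof -
    have "d $ k = real (Suc k) * (poly (lam (Suc k)) (real m + 1) - poly (lam (Suc k)) (real m))"
      by (simp add: d_def L_nth algebra_simps)
    also have "\<dots> = real (Suc k) * ((-(real m + 1))^(Suc k) / real (Suc k))"
      using lam_diff[of "Suc k" "real m"] by (simp only: One_nat_def le_SucI le_refl Suc_le_mono le0 simp_thms)
    also have "\<dots> = (-(real m + 1))^(Suc k)" by (simp del: of_nat_Suc)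
    also have "-(real m + 1) = -s" by (simp add: s_def)
    finally show ?thesis .
  qed
  have "(d * (1 + fps_const s * fps_X)) $ N = d $ N + s * (if N = 0 then 0 else d $ (N-1))"
    by (simp add: algebra_simps)
  also have "\<dots> = (- fps_const s) $ N"
    by (cases N) (simp_all add: dn)
  finally show "((fps_deriv (L (Suc m)) - fps_deriv (L m)) * (1 + fps_const (real (Suc m)) * fps_X)) $ N
       = (- fps_const (real (Suc m))) $ N" by (simp add: d_def s_def)
qed

lemma W0: "W 0 = 1"
  by (rule fps_ext) (simp add: W_def)

lemma L0: "L 0 = 0"
  by (rule fps_ext) (simp add: L_nth poly_lam0)

lemma W_ode: "fps_deriv (W m) = fps_deriv (L m) * W m"
proof (induct m)
  case 0 thus ?case by (simp add: W0 L0)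
next
  case (Suc m)
  define c where "c = fps_const (real (Suc m))"
  define Z where "Z = 1 + c * fps_X"
  have Z0: "Z \<noteq> 0"
  proof
    assume "Z = 0" hence "Z $ 0 = 0" by simp
    thus False by (simp add: Z_def c_def)
  qed
  have r: "W (Suc m) * Z = W m" unfolding Z_def c_def by (rule W_rec)
  have ld: "(fps_deriv (L (Suc m)) - fps_deriv (L m)) * Z = - c"
    unfolding Z_def c_def by (rule L_diff)
  have dc: "fps_deriv c = 0" by (simp add: c_def)
  have dZ: "fps_deriv Z = c" by (simp add: Z_def dc)
  have "fps_deriv (W (Suc m)) * Z + W (Suc m) * c = fps_deriv (W m)"
    using arg_cong[OF r, of fps_deriv] dZ by (simp add: algebra_simps)
  also have "\<dots> = fps_deriv (L m) * (W (Suc m) * Z)" unfolding Suc r ..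
  finally have e: "fps_deriv (W (Suc m)) * Z = fps_deriv (L m) * (W (Suc m) * Z) - W (Suc m) * c"
    by (simp add: algebra_simps)
  have "fps_deriv (W (Suc m)) * Z = W (Suc m) * (fps_deriv (L m) * Z + (fps_deriv (L (Suc m)) - fps_deriv (L m)) * Z)"
    unfolding e ld by (simp add: algebra_simps)
  also have "\<dots> = (fps_deriv (L (Suc m)) * W (Suc m)) * Z" by (simp add: algebra_simps)
  finally have "(fps_deriv (W (Suc m)) - fps_deriv (L (Suc m)) * W (Suc m)) * Z = 0"
    by (simp add: algebra_simps)
  thus ?case using Z0 by simp
qed

lemma exp_L: "fps_exp 1 oo L m = W m"
proof (rule ode_unique)
  have l0: "L m $ 0 = 0" by (simp add: L_nth lam_def)
  show "fps_deriv (fps_exp 1 oo L m) = fps_deriv (L m) * (fps_exp 1 oo L m)"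
    by (simp add: fps_compose_deriv[OF l0] algebra_simps)
  show "fps_deriv (W m) = fps_deriv (L m) * W m" by (rule W_ode)
  show "(fps_exp 1 oo L m) $ 0 = W m $ 0" by (simp add: W_def fps_power_zeroth u0)
qed

lemma PQ: "P = Q"
proof (rule fps_ext)
  fix N
  define p where "p = P $ N - Q $ N"
  have roots: "poly p (real m) = 0" for m
  proof -
    have "poly (P $ N) (real m) = W m $ N"
      using ev_P[of N "real m"] exp_L[of m] by (simp add: L_def)
    thus ?thesis by (simp add: p_def poly_Q_nat)
  qed
  have "p = 0"
  proof (rule ccontr)
    assume "p \<noteq> 0"
    hence "finite {x. poly p x = 0}" by (rule poly_roots_finite)
    moreover have "range real \<subseteq> {x. poly p x = 0}" using roots by auto
    ultimately have "finite (range real)" by (rule finite_subset[rotated])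
    hence "finite (UNIV :: nat set)" using finite_imageD[of real UNIV] inj_of_nat by auto
    thus False by simp
  qed
  thus "P $ N = Q $ N" by (simp add: p_def)
qed

definition evenf :: "real fps \<Rightarrow> bool" where "evenf f \<longleftrightarrow> (\<forall>i. odd i \<longrightarrow> f $ i = 0)"

lemma evenf_mult: assumes "evenf f" "evenf g" shows "evenf (f * g)"
  unfolding evenf_def
proof (intro allI impI)
  fix i :: nat assume i: "odd i"
  have "(f * g) $ i = (\<Sum>j=0..i. f$j * g$(i-j))" by (simp add: fps_mult_nth)
  also have "\<dots> = 0"
  proof (rule sum.neutral, rule ballI)
    fix j assume "j \<in> {0..i}"
    hence ji: "j \<le> i" by simp
    show "f$j * g$(i-j) = 0"
    proof (cases "odd j")
      case True thus ?thesis using assms unfolding evenf_def by simp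
    next
      case False hence "odd (i - j)" using i ji by simp
      thus ?thesis using assms unfolding evenf_def by simp
    qed
  qed
  finally show "(f * g) $ i = 0" .
qed

lemma cube_shift:
  assumes "evenf f" "n \<ge> 1"
  shows "((f + fps_const c * fps_X)^3) $ (2*n) = (f^3) $ (2*n) + 3 * c^2 * f $ (2*n-2)"
proof -
  define C where "C = fps_const c"
  have e: "(f + C * fps_X)^3 = f^3 + 3 * C * (fps_X * f^2) + 3 * C^2 * (fps_X^2 * f) + C^3 * fps_X^3"
    by algebra
  have f2: "evenf (f^2)" using evenf_mult[OF assms(1) assms(1)] by (simp add: power2_eq_square)
  have "(3 * C * (fps_X * f^2)) $ (2*n) = 3 * c * (f^2) $ (2*n-1)"
    using assms by (simp add: C_def numeral_fps_const)
  also have "(f^2) $ (2*n-1) = 0" using f2 assms unfolding evenf_def by simp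
  finally have t1: "(3 * C * (fps_X * f^2)) $ (2*n) = 0" by simp
  have t2: "(3 * C^2 * (fps_X^2 * f)) $ (2*n) = 3 * c^2 * f $ (2*n-2)"
    using assms by (simp add: C_def numeral_fps_const fps_X_power_mult_nth)
  have n3: "2*n \<noteq> (3::nat)" by presburger
  have t3: "(C^3 * fps_X^3) $ (2*n) = 0"
    using n3 by (simp add: C_def fps_X_power_nth)
  show ?thesis unfolding C_def[symmetric] e fps_add_nth t1 t2 t3 by simp
qed

lemma sq_shift:
  assumes "evenf f" "n \<ge> 2"
  shows "((f + fps_const c * fps_X)^2) $ (2*n) = (f^2) $ (2*n)"
proof -
  define C where "C = fps_const c"
  have e: "(f + C * fps_X)^2 = f^2 + 2 * C * (fps_X * f) + C^2 * fps_X^2"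
    by algebra
  have "(2 * C * (fps_X * f)) $ (2*n) = 2 * c * f $ (2*n-1)"
    using assms by (simp add: C_def numeral_fps_const)
  also have "f $ (2*n-1) = 0" using assms unfolding evenf_def by simp
  finally have t1: "(2 * C * (fps_X * f)) $ (2*n) = 0" by simp
  have t3: "(C^2 * fps_X^2) $ (2*n) = 0"
    using assms by (simp add: C_def fps_X_power_nth)
  show ?thesis unfolding C_def[symmetric] e fps_add_nth t1 t3 by simp
qed

lemma lin_shift: fixes f :: "real fps" assumes "n \<ge> 1" shows "(f + fps_const c * fps_X) $ (2*n) = f $ (2*n)"
  using assms by (simp add: fps_X_def)

lemma triple_sum:
  fixes f :: "real fps"
  shows "(f^3) $ N = (\<Sum>(a,b,c)\<in>{(a,b,c). a + b + c = N}. f$a * f$b * f$c)"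
proof -
  have "(f^3) $ N = (\<Sum>a=0..N. f$a * (\<Sum>b=0..N-a. f$b * f$(N-a-b)))"
    by (simp add: power3_eq_cube fps_mult_nth mult.assoc)
  also have "\<dots> = (\<Sum>a=0..N. \<Sum>b=0..N-a. f$a * f$b * f$(N-a-b))"
    by (simp add: sum_distrib_left mult.assoc)
  also have "\<dots> = (\<Sum>(a,b)\<in>Sigma {0..N} (\<lambda>a. {0..N-a}). f$a * f$b * f$(N-a-b))"
    by (rule sum.Sigma) auto
  also have "\<dots> = (\<Sum>(a,b,c)\<in>{(a,b,c). a + b + c = N}. f$a * f$b * f$c)"
  proof (rule sum.reindex_bij_witness[where i = "\<lambda>(a,b,c). (a,b)" and j = "\<lambda>(a,b). (a,b,N-a-b)"])
  qed auto
  finally show ?thesis .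
qed

lemma double_sum:
  fixes f :: "real fps"
  assumes "\<And>i. f $ i \<noteq> 0 \<Longrightarrow> even i \<and> i > 0"
  shows "(f^2) $ (2*n) = (\<Sum>k=1..n-1. f$(2*k) * f$(2*n - 2*k))"
proof -
  have "(f^2) $ (2*n) = (\<Sum>a=0..2*n. f$a * f$(2*n-a))" by (simp add: power2_eq_square fps_mult_nth)
  also have "\<dots> = (\<Sum>a\<in>(\<lambda>k. 2*k) ` {1..n-1}. f$a * f$(2*n-a))"
  proof (rule sum.mono_neutral_right)
    show "\<forall>a\<in>{0..2 * n} - (\<lambda>k. 2*k) ` {1..n-1}. f$a * f$(2*n-a) = 0"
    proof
      fix a assume a: "a \<in> {0..2 * n} - (\<lambda>k. 2*k) ` {1..n-1}"
      show "f$a * f$(2*n-a) = 0"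
      proof (rule ccontr)
        assume "f$a * f$(2*n-a) \<noteq> 0"
        hence "f$a \<noteq> 0" "f$(2*n-a) \<noteq> 0" by auto
        hence ea: "even a \<and> a > 0" and eb: "2*n-a > 0" using assms by blast+
        then obtain k where k: "a = 2*k" by (auto elim!: evenE)
        have "k \<ge> 1" "k \<le> n-1" using k ea eb by auto
        hence "a \<in> (\<lambda>k. 2*k) ` {1..n-1}" using k by auto
        thus False using a by auto
      qed
    qed
  qed auto
  also have "\<dots> = (\<Sum>k=1..n-1. f$(2*k) * f$(2*n - 2*k))"
    by (subst sum.reindex) (auto simp: inj_on_def)
  finally show ?thesis .
qed

lemma triple_comp3:
  fixes f :: "real fps"
  assumes "\<And>i. f $ i \<noteq> 0 \<Longrightarrow> even i \<and> i > 0"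
  shows "(f^3) $ (2*n) = (\<Sum>(k,l,m)\<in>comp3 n. f$(2*k) * f$(2*l) * f$(2*m))"
proof -
  let ?h = "\<lambda>(k,l,m). (2*k, 2*l, 2*(m::nat))"
  have fin: "finite {(a,b,c). a + b + c = N}" for N :: nat
  proof -
    have "{(a,b,c). a + b + c = N} \<subseteq> {0..N} \<times> {0..N} \<times> {0..N}" by auto
    thus ?thesis by (rule finite_subset) simp
  qed
  have "(f^3) $ (2*n) = (\<Sum>(a,b,c)\<in>{(a,b,c). a + b + c = 2*n}. f$a * f$b * f$c)"
    by (rule triple_sum)
  also have "\<dots> = (\<Sum>(a,b,c)\<in>?h ` comp3 n. f$a * f$b * f$c)"
  proof (rule sum.mono_neutral_right)
    show "finite {(a,b,c). a + b + c = 2*n}" by (rule fin)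
    show "?h ` comp3 n \<subseteq> {(a,b,c). a + b + c = 2*n}" by (auto simp: comp3_def)
    show "\<forall>x\<in>{(a,b,c). a + b + c = 2*n} - ?h ` comp3 n. (case x of (a,b,c) \<Rightarrow> f$a * f$b * f$c) = 0"
    proof
      fix x assume x: "x \<in> {(a,b,c). a + b + c = 2*n} - ?h ` comp3 n"
      obtain a b c where abc: "x = (a,b,c)" by (cases x) auto
      show "(case x of (a,b,c) \<Rightarrow> f$a * f$b * f$c) = 0"
      proof (rule ccontr)
        assume "(case x of (a,b,c) \<Rightarrow> f$a * f$b * f$c) \<noteq> 0"
        hence "f$a \<noteq> 0" "f$b \<noteq> 0" "f$c \<noteq> 0" using abc by auto
        hence "even a \<and> a > 0" "even b \<and> b > 0" "even c \<and> c > 0" using assms by blast+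
        then obtain k l m where klm: "a = 2*k" "b = 2*l" "c = 2*m" "k \<ge> 1" "l \<ge> 1" "m \<ge> 1"
          by (auto elim!: evenE)
        moreover have "a + b + c = 2*n" using x abc by auto
        ultimately have "(k,l,m) \<in> comp3 n" by (auto simp: comp3_def)
        hence "x \<in> ?h ` comp3 n" using klm abc by force
        thus False using x by auto
      qed
    qed
  qed
  also have "\<dots> = (\<Sum>(k,l,m)\<in>comp3 n. f$(2*k) * f$(2*l) * f$(2*m))"
    by (subst sum.reindex) (auto simp: inj_on_def intro!: sum.cong)
  finally show ?thesis .
qed

definition Dp :: "real fps" where
  "Dp = Abs_fps (\<lambda>i. if even i \<and> i > 0 then bernoulli i / real i else 0)"
definition Gp :: "real fps" where
  "Gp = Abs_fps (\<lambda>i. if even i \<and> i > 0 then bernoulli i / (real i * fact i) else 0)"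

lemma evenf_Dp: "evenf Dp" by (simp add: evenf_def Dp_def)
lemma evenf_Gp: "evenf Gp" by (simp add: evenf_def Gp_def)
lemma supp_Dp: "Dp $ i \<noteq> 0 \<Longrightarrow> even i \<and> i > 0" by (simp add: Dp_def split: if_splits)
lemma supp_Gp: "Gp $ i \<noteq> 0 \<Longrightarrow> even i \<and> i > 0" by (simp add: Gp_def split: if_splits)

lemma sl1n: "sl 1 Lam $ i = (if i = 0 then 0 else bernoulli i / real i)"
proof (cases "i = 0")
  case True thus ?thesis by (simp add: sl_nth Lam_def lam_def)
next
  case False thus ?thesis using coeff_lam1[of i] by (simp add: sl_nth Lam_def)
qed

lemma sl2n: "sl 2 Lam $ i = (if i = 0 then 0 else - bernoulli (i - 1) / 2)"
proof (cases "i = 0")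
  case True thus ?thesis by (simp add: sl_nth Lam_def lam_def)
next
  case False thus ?thesis using coeff_lam2[of i] by (simp add: sl_nth Lam_def)
qed

lemma bern1': "bernoulli (Suc 0) = -1/2" using bern1 by simp

lemma sl1n': "sl (Suc 0) Lam $ i = (if i = 0 then 0 else bernoulli i / real i)"
  using sl1n by simp

lemma sl1_split: "sl 1 Lam = Dp + fps_const (-1/2) * fps_X"
proof (rule fps_ext)
  fix i
  show "sl 1 Lam $ i = (Dp + fps_const (-1/2) * fps_X) $ i"
  proof (cases "i = 1")
    case True
    have "sl 1 Lam $ 1 = -1/2" using sl1n[of 1] bern1 by simp
    moreover have "(Dp + fps_const (-1/2) * fps_X) $ 1 = -1/2" by (simp add: Dp_def fps_X_def)
    ultimately show ?thesis using True by simp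
  next
    case False
    hence "(Dp + fps_const (-1/2) * fps_X) $ i = Dp $ i" by (simp add: fps_X_def)
    moreover have "sl 1 Lam $ i = Dp $ i"
    proof (cases "even i")
      case True thus ?thesis by (simp add: sl1n sl1n' Dp_def)
    next
      case odd: False
      hence "i \<ge> 3" using False by presburger
      thus ?thesis using odd by (simp add: sl1n sl1n' Dp_def bern_odd)
    qed
    ultimately show ?thesis by simp
  qed
qed

lemma gm_split: "gm = Gp + fps_const (-1/2) * fps_X"
proof (rule fps_ext)
  fix i
  show "gm $ i = (Gp + fps_const (-1/2) * fps_X) $ i"
  proof (cases "i = 1")
    case True
    have "gm $ 1 = -1/2" using bern1 by (simp add: gm_def)
    moreover have "(Gp + fps_const (-1/2) * fps_X) $ 1 = -1/2" by (simp add: Gp_def fps_X_def)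
    ultimately show ?thesis using True by simp
  next
    case False
    hence "(Gp + fps_const (-1/2) * fps_X) $ i = Gp $ i" by (simp add: fps_X_def)
    moreover have "gm $ i = Gp $ i"
    proof (cases "even i")
      case True thus ?thesis by (simp add: gm_def Gp_def)
    next
      case odd: False
      hence "i \<ge> 3" using False by presburger
      thus ?thesis using odd by (simp add: gm_def Gp_def bern_odd)
    qed
    ultimately show ?thesis by simp
  qed
qed

lemma prod12:
  assumes n: "n \<ge> 3"
  shows "(sl 1 Lam * sl 2 Lam) $ (2*n) = bernoulli (2*n-2) / real (2*n-2) / 4 + bernoulli (2*n-2) / 4"
proof -
  have "(sl 1 Lam * sl 2 Lam) $ (2*n) = (\<Sum>i=0..2*n. sl 1 Lam $ i * sl 2 Lam $ (2*n-i))"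
    by (simp add: fps_mult_nth)
  also have "\<dots> = (\<Sum>i\<in>{1, 2*n-2}. sl 1 Lam $ i * sl 2 Lam $ (2*n-i))"
  proof (rule sum.mono_neutral_right)
    show "\<forall>i\<in>{0..2*n} - {1, 2*n-2}. sl 1 Lam $ i * sl 2 Lam $ (2*n-i) = 0"
    proof
      fix i assume i: "i \<in> {0..2*n} - {1, 2*n-2}"
      hence i1: "i \<noteq> 1" and i2: "i \<noteq> 2*n-2" and i3: "i \<le> 2*n" by auto
      show "sl 1 Lam $ i * sl 2 Lam $ (2*n-i) = 0"
      proof (cases "i = 0 \<or> odd i")
        case True
        hence "sl 1 Lam $ i = 0"
        proof
          assume "odd i" hence "i \<ge> 3" using i1 by presburger
          thus ?thesis using \<open>odd i\<close> by (simp add: sl1n sl1n' bern_odd)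
        qed (simp add: sl1n sl1n')
        thus ?thesis by simp
      next
        case False
        have "sl 2 Lam $ (2*n-i) = 0"
        proof (cases "i = 2*n")
          case True thus ?thesis by (simp add: sl2n)
        next
          case ne: False
          have "odd (2*n - i - 1)" "2*n - i - 1 \<ge> 3" using False ne i1 i2 i3 n by presburger+
          thus ?thesis by (simp add: sl2n bern_odd)
        qed
        thus ?thesis by simp
      qed
    qed
  qed (use n in auto)
  also have "\<dots> = sl 1 Lam $ 1 * sl 2 Lam $ (2*n-1) + sl 1 Lam $ (2*n-2) * sl 2 Lam $ 2"
  proof -
    have "1 \<noteq> 2*n-2" using n by presburger
    moreover have "2*n - (2*n-2) = 2" using n by simp
    ultimately show ?thesis by simp
  qed
  also have "\<dots> = bernoulli (2*n-2) / real (2*n-2) / 4 + bernoulli (2*n-2) / 4"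
  proof -
    have a1: "sl 1 Lam $ 1 = -1/2" using sl1n[of 1] bern1 by simp
    have "2*n-1 \<noteq> 0" "2*n-1-1 = 2*n-2" using n by auto
    hence a2: "sl 2 Lam $ (2*n-1) = - bernoulli (2*n-2) / 2" using sl2n[of "2*n-1"] by simp
    have "2*n-2 \<noteq> 0" using n by auto
    hence a3: "sl 1 Lam $ (2*n-2) = bernoulli (2*n-2) / real (2*n-2)" using sl1n[of "2*n-2"] by simp
    have a4: "sl 2 Lam $ 2 = 1/4" using sl2n[of 2] bern1 by simp
    show ?thesis unfolding a1 a2 a3 a4 by simp
  qed
  finally show ?thesis .
qed

lemma comp3_swap13: "(\<Sum>(k,l,m)\<in>comp3 n. F k l m) = (\<Sum>(k,l,m)\<in>comp3 n. (F m l k :: real))"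
  by (rule sum.reindex_bij_witness[where i="\<lambda>(k,l,m). (m,l,k)" and j="\<lambda>(k,l,m). (m,l,k)"])
     (auto simp: comp3_def)

lemma comp3_swap23: "(\<Sum>(k,l,m)\<in>comp3 n. F k l m) = (\<Sum>(k,l,m)\<in>comp3 n. (F k m l :: real))"
  by (rule sum.reindex_bij_witness[where i="\<lambda>(k,l,m). (k,m,l)" and j="\<lambda>(k,l,m). (k,m,l)"])
     (auto simp: comp3_def)

lemma comp3_sym:
  fixes g :: "nat \<Rightarrow> real"
  shows "(\<Sum>(k,l,m)\<in>comp3 n. g k * g l * g m * real m) = real n / 3 * (\<Sum>(k,l,m)\<in>comp3 n. g k * g l * g m)"
proof -
  let ?A = "\<lambda>h. (\<Sum>(k,l,m)\<in>comp3 n. g k * g l * g m * real (h k l m))"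
  have am: "?A (\<lambda>k l m. m) = ?A (\<lambda>k l m. k)"
    by (subst comp3_swap13) (simp add: mult_ac)
  have al: "?A (\<lambda>k l m. m) = ?A (\<lambda>k l m. l)"
    by (subst comp3_swap23) (simp add: mult_ac)
  have "?A (\<lambda>k l m. k) + ?A (\<lambda>k l m. l) + ?A (\<lambda>k l m. m) = (\<Sum>(k,l,m)\<in>comp3 n. g k * g l * g m * real n)"
    unfolding sum.distrib[symmetric]
    by (rule sum.cong) (auto simp: comp3_def algebra_simps)
  also have "\<dots> = real n * (\<Sum>(k,l,m)\<in>comp3 n. g k * g l * g m)"
    by (simp add: sum_distrib_left case_prod_beta mult_ac)
  finally show ?thesis using am al by simp
qed

lemma T1_eq:
  assumes "n \<ge> 1"
  shows "3 / (2 * real n) * (\<Sum>(k,l,m)\<in>comp3 n. bernoulli (2*k) * bernoulli (2*l) * bernoulli (2*m)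
            / (real (2*k) * real (2*l)) * multinom3 (2*n) (2*k) (2*l) (2*m))
       = fact (2*n) * (\<Sum>(k,l,m)\<in>comp3 n. Gp $ (2*k) * Gp $ (2*l) * Gp $ (2*m))"
proof -
  define g where "g k = Gp $ (2*k)" for k
  have gk: "k \<ge> 1 \<Longrightarrow> g k = bernoulli (2*k) / (real (2*k) * fact (2*k))" for k
    by (simp add: g_def Gp_def)
  have "(\<Sum>(k,l,m)\<in>comp3 n. bernoulli (2*k) * bernoulli (2*l) * bernoulli (2*m)
            / (real (2*k) * real (2*l)) * multinom3 (2*n) (2*k) (2*l) (2*m))
      = (\<Sum>(k,l,m)\<in>comp3 n. fact (2*n) * 2 * (g k * g l * g m * real m))"
  proof (rule sum.cong[OF refl], clarify)
    fix k l m assume "(k,l,m) \<in> comp3 n"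
    hence "k \<ge> 1" "l \<ge> 1" "m \<ge> 1" by (auto simp: comp3_def)
    thus "bernoulli (2*k) * bernoulli (2*l) * bernoulli (2*m)
            / (real (2*k) * real (2*l)) * multinom3 (2*n) (2*k) (2*l) (2*m)
        = fact (2*n) * 2 * (g k * g l * g m * real m)"
      by (simp add: gk multinom3_def field_simps)
  qed
  also have "\<dots> = fact (2*n) * 2 * (\<Sum>(k,l,m)\<in>comp3 n. g k * g l * g m * real m)"
    by (simp add: sum_distrib_left case_prod_beta)
  also have "\<dots> = fact (2*n) * 2 * (real n / 3 * (\<Sum>(k,l,m)\<in>comp3 n. g k * g l * g m))"
    by (simp only: comp3_sym)
  finally show ?thesis using assms by (simp add: g_def field_simps)
qed

lemma aux_field:
  fixes A Bv F1 F2 F b1 b2 :: real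
  assumes "A \<noteq> 0" "Bv \<noteq> 0" "F1 \<noteq> 0" "F2 \<noteq> 0"
  shows "(F / (F1 * F2)) * b1 * b2 / A = F * (b1 / (A * F1) * (b2 / (Bv * F2))) * Bv"
  using assms by (simp add: field_simps)

lemma T2_eq:
  assumes "n \<ge> 1"
  shows "(\<Sum>k=1..n-1. real ((2*n) choose (2*k)) * bernoulli (2*k) * bernoulli (2*n - 2*k) / real (2*k))
       = real n * fact (2*n) * (\<Sum>k=1..n-1. Gp $ (2*k) * Gp $ (2*n - 2*k))"
proof -
  define phi where "phi k = fact (2*n) * (Gp $ (2*k) * Gp $ (2*n - 2*k))" for k
  have t: "real ((2*n) choose (2*k)) * bernoulli (2*k) * bernoulli (2*n - 2*k) / real (2*k) = phi k * real (2*n - 2*k)"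
    if k: "k \<in> {1..n-1}" for k
  proof -
    have k1: "k \<ge> 1" "k < n" using k by auto
    have b: "real ((2*n) choose (2*k)) = fact (2*n) / (fact (2*k) * fact (2*n - 2*k))"
      using binomial_fact[of "2*k" "2*n"] k1 by simp
    have e: "even (2*n - 2*k)" "2*n - 2*k > 0" using k1 by auto
    have g2: "Gp $ (2*n - 2*k) = bernoulli (2*n - 2*k) / (real (2*n - 2*k) * fact (2*n - 2*k))"
      using e by (simp add: Gp_def)
    have g1: "Gp $ (2*k) = bernoulli (2*k) / (real (2*k) * fact (2*k))" using k1 by (simp add: Gp_def)
    have nz2: "real (2*n - 2*k) \<noteq> 0" using e by simp
    have nz1: "real (2*k) \<noteq> 0" using k1 by simp
    show ?thesis unfolding phi_def b g1 g2 by (rule aux_field) (use nz1 nz2 in simp_all)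
  qed
  have rfl_eq: "(\<Sum>k=1..n-1. phi k * real (2*n - 2*k)) = (\<Sum>k=1..n-1. phi k * real (2*k))"
  proof (rule sum.reindex_bij_witness[where i="\<lambda>k. n - k" and j="\<lambda>k. n - k"])
    fix k assume k: "k \<in> {1..n-1}"
    have "2*(n-k) = 2*n-2*k" "2*n - 2*(n-k) = 2*k" using k by auto
    hence "phi (n - k) = phi k" unfolding phi_def by (simp add: mult.commute)
    moreover have "2*(n-k) = 2*n-2*k" using k by auto
    ultimately show "phi (n - k) * real (2 * (n - k)) = phi k * real (2 * n - 2 * k)" by simp
  qed auto
  have "2 * (\<Sum>k=1..n-1. phi k * real (2*n - 2*k)) = (\<Sum>k=1..n-1. phi k * (real (2*n - 2*k) + real (2*k)))"
    by (simp only: distrib_left sum.distrib rfl_eq[symmetric] mult_2[where 'a=real])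
  also have "\<dots> = (\<Sum>k=1..n-1. phi k * (2 * real n))"
    by (rule sum.cong) (auto simp flip: of_nat_add)
  also have "\<dots> = (\<Sum>k=1..n-1. phi k) * (2 * real n)" by (simp only: sum_distrib_right[symmetric])
  finally have h: "2 * (\<Sum>k=1..n-1. phi k * real (2*n - 2*k)) = (\<Sum>k=1..n-1. phi k) * (2 * real n)" .
  have "(\<Sum>k=1..n-1. phi k * real (2*n - 2*k)) = real n * (\<Sum>k=1..n-1. phi k)"
    using h by (simp add: algebra_simps)
  moreover have "(\<Sum>k=1..n-1. real ((2*n) choose (2*k)) * bernoulli (2*k) * bernoulli (2*n - 2*k) / real (2*k))
      = (\<Sum>k=1..n-1. phi k * real (2*n - 2*k))"
    by (rule sum.cong[OF refl]) (rule t)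
  ultimately show ?thesis by (simp add: phi_def sum_distrib_left mult_ac)
qed

lemma lin_alg:
  fixes x q S3 A Bt T :: real
  assumes E: "(2*x-1)*((2*x-2)*q)/6 + (q/4 + (2*x-2)*q/4) + (S3 + 3/4*q)/6
        = (A + 3/4*(2*x*(2*x-1))*q)/6 + Bt/2 + T"
  shows "S3 = A + 3*Bt + 6*T - (x^2 - 3/2*x + 5/4)*q"
proof -
  have "S3 = 6 * ((2*x-1)*((2*x-2)*q)/6 + (q/4 + (2*x-2)*q/4) + (S3 + 3/4*q)/6)
     - (2*x-1)*((2*x-2)*q) - 6*(q/4 + (2*x-2)*q/4) - 3/4*q" by (simp add: field_simps)
  also have "\<dots> = 6 * ((A + 3/4*(2*x*(2*x-1))*q)/6 + Bt/2 + T)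
     - (2*x-1)*((2*x-2)*q) - 6*(q/4 + (2*x-2)*q/4) - 3/4*q" unfolding E ..
  also have "\<dots> = A + 3*Bt + 6*T - (x^2 - 3/2*x + 5/4)*q"
    by (simp add: field_simps power2_eq_square)
  finally show ?thesis .
qed

theorem theorem5p2:
  fixes n :: nat
  assumes "n \<ge> 3"
  shows "(\<Sum>(k,l,m)\<in>comp3 n. bernoulli (2*k) * bernoulli (2*l) * bernoulli (2*m)
            / (real (2*k) * real (2*l) * real (2*m)))
       = 3 / (2 * real n) * (\<Sum>(k,l,m)\<in>comp3 n. bernoulli (2*k) * bernoulli (2*l) * bernoulli (2*m)
            / (real (2*k) * real (2*l)) * multinom3 (2*n) (2*k) (2*l) (2*m))
         + 3 / real n * harm (2*n) * (\<Sum>k=1..n-1. real ((2*n) choose (2*k))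
            * bernoulli (2*k) * bernoulli (2*n - 2*k) / real (2*k))
         + 6 * harm2 (2*n) * bernoulli (2*n) / real (2*n)
         - ((real n)^2 - 3/2 * real n + 5/4) * bernoulli (2*n - 2) / real (2*n - 2)"
proof -
  have n1: "n \<ge> 1" and n2: "n \<ge> 2" using assms by auto
  define x where "x = real n"
  have x0: "x \<noteq> 0" using n1 by (simp add: x_def)
  define N where "N = 2*n"
  have N3: "N \<ge> 3" using assms by (simp add: N_def)
  define b where "b = bernoulli (2*n-2)"
  define r where "r = real (2*n-2)"
  have r_eq: "r = 2*x - 2" using n1 by (simp add: r_def x_def of_nat_diff)
  have r0: "r \<noteq> 0" using n2 by (simp add: r_eq x_def)
  define q where "q = b / r"
  have bq: "b = (2*x-2)*q" using r0 by (simp add: q_def r_eq)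
  define S3 where "S3 = (\<Sum>(k,l,m)\<in>comp3 n. bernoulli (2*k) * bernoulli (2*l) * bernoulli (2*m)
            / (real (2*k) * real (2*l) * real (2*m)))"
  define G3 where "G3 = (\<Sum>(k,l,m)\<in>comp3 n. Gp $ (2*k) * Gp $ (2*l) * Gp $ (2*m))"
  define G2 where "G2 = (\<Sum>k=1..n-1. Gp $ (2*k) * Gp $ (2*n - 2*k))"
  define F where "F = (fact (2*n) :: real)"
  define F' where "F' = (fact (2*n-2) :: real)"
  have F'0: "F' \<noteq> 0" by (simp add: F'_def)
  have FF: "F = 2*x*(2*x-1)*F'"
  proof -
    have f1: "(fact (2*n) :: real) = real (2*n) * fact (2*n-1)"
      using fact_reduce[of "2*n", where 'a=real] n1 by simp
    have f2: "(fact (2*n-1) :: real) = real (2*n-1) * fact (2*n-2)"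
      using fact_reduce[of "2*n-1", where 'a=real] n1 by (simp add: numeral_2_eq_2)
    have e1: "real (2*n) = 2*x" by (simp add: x_def)
    have e2: "real (2*n-1) = 2*x-1" using n1 by (simp add: x_def of_nat_diff)
    show ?thesis unfolding F_def F'_def f1 f2 e1 e2 by (simp only: mult.assoc)
  qed
  have Npos: "N - 2 = 2*n-2" "N - 1 = 2*n - 1" by (auto simp: N_def)
  have s3L: "sl 3 Lam $ N = (2*x-1) * b / 6"
    using coeff_lam3[of N] N3 n1 by (simp add: sl_nth Lam_def Npos b_def x_def of_nat_diff N_def)
  have p12: "(sl 1 Lam * sl 2 Lam) $ N = q/4 + b/4"
    using prod12[OF assms] by (simp add: N_def q_def r_def b_def)
  have Dp_e: "Dp $ (2*k) = bernoulli (2*k) / real (2*k)" if "k \<ge> 1" for k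
    using that by (simp add: Dp_def)
  have cube: "(sl 1 Lam ^ 3) $ N = S3 + 3/4 * q"
  proof -
    have "(sl 1 Lam ^ 3) $ N = (Dp^3) $ (2*n) + 3 * (-1/2)^2 * Dp $ (2*n-2)"
      unfolding sl1_split N_def by (rule cube_shift[OF evenf_Dp n1])
    also have "(Dp^3) $ (2*n) = S3"
    proof -
      have "(Dp^3) $ (2*n) = (\<Sum>(k,l,m)\<in>comp3 n. Dp$(2*k) * Dp$(2*l) * Dp$(2*m))"
        by (rule triple_comp3[OF supp_Dp])
      also have "\<dots> = S3" unfolding S3_def
        by (rule sum.cong[OF refl]) (auto simp: comp3_def Dp_e)
      finally show ?thesis .
    qed
    also have "Dp $ (2*n-2) = q"
    proof -
      have "even (2*n-2)" "2*n-2 > 0" using n2 by auto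
      thus ?thesis by (simp add: Dp_def q_def b_def r_def)
    qed
    finally show ?thesis by (simp add: power2_eq_square)
  qed
  have Gp_e: "Gp $ (2*n-2) = b / (r * F')"
  proof -
    have "even (2*n-2)" "2*n-2 > 0" using n2 by auto
    thus ?thesis by (simp add: Gp_def b_def r_def F'_def)
  qed
  have g3: "(gm^3) $ N = G3 + 3/4 * (b / (r * F'))"
  proof -
    have "(gm^3) $ N = (Gp^3) $ (2*n) + 3 * (-1/2)^2 * Gp $ (2*n-2)"
      unfolding gm_split N_def by (rule cube_shift[OF evenf_Gp n1])
    also have "(Gp^3) $ (2*n) = G3" unfolding G3_def by (rule triple_comp3[OF supp_Gp])
    finally show ?thesis by (simp add: Gp_e power2_eq_square)
  qed
  have g2: "(gm^2) $ N = G2"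
  proof -
    have "(gm^2) $ N = (Gp^2) $ (2*n)" unfolding gm_split N_def by (rule sq_shift[OF evenf_Gp n2])
    also have "\<dots> = G2" unfolding G2_def by (rule double_sum[OF supp_Gp])
    finally show ?thesis .
  qed
  have g1: "gm $ N = bernoulli (2*n) / (real (2*n) * F)"
  proof -
    have "gm $ N = Gp $ (2*n)" unfolding gm_split N_def by (rule lin_shift[OF n1])
    thus ?thesis using n1 by (simp add: Gp_def F_def)
  qed
  have main: "sl 3 P $ N = sl 3 Q $ N" by (simp add: PQ)
  hence "(2*x-1) * b / 6 + (q/4 + b/4) + (S3 + 3/4 * q) / 6
      = F * (G3 + 3/4 * (b / (r * F'))) / 6 + F * harm (2*n) * G2 / 2 + F * harm2 (2*n) * (bernoulli (2*n) / (real (2*n) * F))"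
    unfolding sl3_P[OF N3] sl3_Q[OF N3] s3L p12 cube g3 g2 g1 by (simp add: N_def F_def)
  moreover have "F * (G3 + 3/4 * (b / (r * F'))) = F * G3 + 3/4*(2*x*(2*x-1))*q"
  proof -
    have fb: "F * (b / (r * F')) = 2*x*(2*x-1)*q" unfolding FF q_def using F'0 r0 by simp
    have "F * (G3 + 3/4 * (b / (r * F'))) = F * G3 + 3/4 * (F * (b / (r * F')))"
      by (simp only: distrib_left mult.left_commute)
    thus ?thesis unfolding fb by simp
  qed
  moreover have "F * harm2 (2*n) * (bernoulli (2*n) / (real (2*n) * F)) = harm2 (2*n) * bernoulli (2*n) / real (2*n)"
    using n1 by (simp add: F_def)
  ultimately have E: "(2*x-1)*((2*x-2)*q)/6 + (q/4 + (2*x-2)*q/4) + (S3 + 3/4*q)/6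
        = (F * G3 + 3/4*(2*x*(2*x-1))*q)/6 + (F * harm (2*n) * G2)/2 + harm2 (2*n) * bernoulli (2*n) / real (2*n)"
    unfolding bq[symmetric] by (simp add: add_divide_distrib)
  have L: "S3 = F * G3 + 3 * (F * harm (2*n) * G2) + 6 * (harm2 (2*n) * bernoulli (2*n) / real (2*n))
             - (x^2 - 3/2*x + 5/4)*q"
    by (rule lin_alg[OF E])
  have t1: "3 / (2 * real n) * (\<Sum>(k,l,m)\<in>comp3 n. bernoulli (2*k) * bernoulli (2*l) * bernoulli (2*m)
            / (real (2*k) * real (2*l)) * multinom3 (2*n) (2*k) (2*l) (2*m)) = F * G3"
    unfolding T1_eq[OF n1] F_def G3_def ..
  have t2: "3 / real n * harm (2*n) * (\<Sum>k=1..n-1. real ((2*n) choose (2*k))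
            * bernoulli (2*k) * bernoulli (2*n - 2*k) / real (2*k)) = 3 * (F * harm (2*n) * G2)"
    unfolding T2_eq[OF n1] using x0 by (simp add: F_def G2_def x_def)
  have t3: "6 * harm2 (2*n) * bernoulli (2*n) / real (2*n) = 6 * (harm2 (2*n) * bernoulli (2*n) / real (2*n))"
    by simp
  have t4: "((real n)^2 - 3/2 * real n + 5/4) * bernoulli (2*n - 2) / real (2*n - 2) = (x^2 - 3/2*x + 5/4)*q"
    by (simp add: x_def q_def b_def r_def)
  show ?thesis unfolding t1 t2 t3 t4 S3_def[symmetric] by (rule L)
qed

end
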